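(* Let $A,B,C$ be logically independent events. Given $(x,y)\in[0,1]^2$, the assessment $P(C|A)=x$, $P(C|B)=y$, $P(C|(A\vee B))=z$ is coherent if and only if $z'\le z\le z''$, where \[ z'=\begin{cases}\dfrac{xy}{x+y-xy}, & (x,y)\neq(0,0),\\ 0, & (x,y)=(0,0),\end{cases}\qquad z''=\begin{cases}\dfrac{x+y-2xy}{1-xy}, & (x,y)\neq(1,1),\\ 1, & (x,y)=(1,1).\end{cases} \] Consequently, if $0\le\alpha_i\le\beta_i\le1$ ($i=1,2$) with $(\alpha_1,\alpha_2)\neq(0,0)$ and $(\beta_1,\beta_2)\neq(1,1)$, the set of values $z$ for which there exist $x\in[\alpha_1,\beta_1]$, $y\in[\alpha_2,\beta_2]$ making $(x,y,z)$ a coherent assessment on $(C|A,C|B,C|(A\vee B))$ is exactly $[\alpha_3,\beta_3]$ with \[ \alpha_3=\frac{\alpha_1\alpha_2}{\alpha_1+\alpha_2-\alpha_1\alpha_2},\qquad \beta_3=\frac{\beta_1+\beta_2-2\beta_1\beta_2}{1-\beta_1\beta_2}. \]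
   Context: Events are elements of a Boolean algebra; $AB$ denotes conjunction, $A\vee B$ disjunction, $A^c$ negation. $A,B,C$ are logically independent if all eight conjunctions $A^{*}B^{*}C^{*}$ (each $X^{*}\in\{X,X^c\}$) are possible (nonempty). A conditional event $E|H$ requires $H\neq\emptyset$; conditional probabilities are treated as primitive (no requirement that $P(H)>0$). Coherence (de Finetti): an assessment $(p_1,\dots,p_n)$ on conditional events $E_1|H_1,\dots,E_n|H_n$ is coherent if for every nonempty $J\subseteq\{1,\dots,n\}$ and every real numbers $s_j$ ($j\in J$), the random gain $G=\sum_{j\in J}s_j\,I_{H_j}(I_{E_j}-p_j)$ (with $I$ denoting indicator functions) satisfies $\max G\ge 0$, where the maximum is taken over the possible worlds (atoms) contained in $\bigvee_{j\in J}H_j$. *)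

theory Defs
  imports Main "HOL-Library.Indicator_Function"
begin

text \<open>Events are modelled as sets of possible worlds (a field of sets, i.e. a
Boolean algebra of sets): conjunction = intersection, disjunction = union,
negation = complement.\<close>

definition logically_independent3 :: "'w set \<Rightarrow> 'w set \<Rightarrow> 'w set \<Rightarrow> bool" where
  "logically_independent3 A B C \<longleftrightarrow>
     (\<forall>A' \<in> {A, -A}. \<forall>B' \<in> {B, -B}. \<forall>C' \<in> {C, -C}. A' \<inter> B' \<inter> C' \<noteq> {})"

text \<open>An assessment is a list of triples (E, H, p) meaning P(E|H) = p.
De Finetti coherence: every conditioning event is nonempty and, for every
nonempty subfamily J and every choice of real stakes s, the random gain
has a nonnegative value at some possible world in the disjunction of the
conditioning events of J.\<close>

definition coherent :: "('w set \<times> 'w set \<times> real) list \<Rightarrow> bool" where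
  "coherent L \<longleftrightarrow>
     (\<forall>j < length L. fst (snd (L ! j)) \<noteq> {}) \<and>
     (\<forall>J \<subseteq> {..<length L}. J \<noteq> {} \<longrightarrow>
       (\<forall>s :: nat \<Rightarrow> real.
          \<exists>w \<in> (\<Union>j\<in>J. fst (snd (L ! j))).
            (\<Sum>j\<in>J. s j * indicator (fst (snd (L ! j))) w *
                      (indicator (fst (L ! j)) w - snd (snd (L ! j)))) \<ge> 0))"

definition zlow :: "real \<Rightarrow> real \<Rightarrow> real" where
  "zlow x y = (if (x, y) \<noteq> (0, 0) then x * y / (x + y - x * y) else 0)"

definition zupp :: "real \<Rightarrow> real \<Rightarrow> real" where
  "zupp x y = (if (x, y) \<noteq> (1, 1) then (x + y - 2 * x * y) / (1 - x * y) else 1)"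

end

theory Submission
  imports Defs
begin


lemma key6:
  fixes l1 l2 l3 l4 l5 l6 g1 g2 g3 g4 g5 g6 :: real
  assumes "l1 \<ge> 0" "l2 \<ge> 0" "l3 \<ge> 0" "l4 \<ge> 0" "l5 \<ge> 0" "l6 \<ge> 0"
    "l1 + l2 + l3 + l4 + l5 + l6 > 0"
    "l1*g1 + l2*g2 + l3*g3 + l4*g4 + l5*g5 + l6*g6 = 0"
  shows "g1 \<ge> 0 \<or> g2 \<ge> 0 \<or> g3 \<ge> 0 \<or> g4 \<ge> 0 \<or> g5 \<ge> 0 \<or> g6 \<ge> 0"
proof (rule ccontr)
  assume "\<not> ?thesis"
  then have g: "g1 < 0" "g2 < 0" "g3 < 0" "g4 < 0" "g5 < 0" "g6 < 0" by auto
  have p: "l1*g1 \<le> 0" "l2*g2 \<le> 0" "l3*g3 \<le> 0" "l4*g4 \<le> 0" "l5*g5 \<le> 0" "l6*g6 \<le> 0"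
    using assms g by (simp_all add: mult_nonneg_nonpos)
  then have "l1*g1 = 0" "l2*g2 = 0" "l3*g3 = 0" "l4*g4 = 0" "l5*g5 = 0" "l6*g6 = 0"
    using assms(8) by linarith+
  then have "l1 = 0" "l2 = 0" "l3 = 0" "l4 = 0" "l5 = 0" "l6 = 0" using g by auto
  then show False using assms(7) by simp
qed

lemma suff6:
  fixes x y z s0 s1 s2 :: real
  assumes x: "0 \<le> x" "x \<le> 1" and y: "0 \<le> y" "y \<le> 1"
    and lo: "zlow x y \<le> z" and up: "z \<le> zupp x y"
  shows "s0*(1-x)+s1*(1-y)+s2*(1-z) \<ge> 0 \<or> -s0*x-s1*y-s2*z \<ge> 0 \<or>
         s0*(1-x)+s2*(1-z) \<ge> 0 \<or> -s0*x-s2*z \<ge> 0 \<or>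
         s1*(1-y)+s2*(1-z) \<ge> 0 \<or> -s1*y-s2*z \<ge> 0"
proof (cases "(x,y) = (0,0) \<or> (x,y) = (1,1)")
  case True
  then show ?thesis
  proof
    assume "(x,y) = (0,0)"
    then have "x = 0" "y = 0" "z = 0" using lo up by (auto simp: zlow_def zupp_def)
    then show ?thesis by simp
  next
    assume "(x,y) = (1,1)"
    then have "x = 1" "y = 1" "z = 1" using lo up by (auto simp: zlow_def zupp_def)
    then show ?thesis by simp
  qed
next
  case False
  define SL where "SL = x + y - x*y"
  define SU where "SU = 1 - x*y"
  define CL where "CL = x*y"
  define CU where "CU = x + y - 2*x*y"
  have xy0: "x*y \<ge> 0" using x y by simp
  have xy1: "x*y \<le> x" "x*y \<le> y" using x y mult_right_le_one_le[of x y] mult_left_le_one_le[of y x] by simp_all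
  have "x * y < 1"
  proof (rule ccontr)
    assume "\<not> x*y < 1"
    then have "x*y \<ge> 1" by simp
    then have "x = 1" "y = 1" using xy1 x y by linarith+
    then show False using False by simp
  qed
  then have SU: "SU > 0" unfolding SU_def by simp
  have SL: "SL > 0"
  proof -
    have "x > 0 \<or> y > 0" using False x y by auto
    then show ?thesis unfolding SL_def using xy1 x y
      by (smt (verit) mult_left_le_one_le mult_right_le_one_le mult_nonneg_nonneg)
  qed
  have lo': "CL \<le> z * SL"
    using lo False SL unfolding zlow_def SL_def CL_def by (auto simp: divide_le_eq mult.commute)
  have up': "z * SU \<le> CU"
    using up False SU unfolding zupp_def SU_def CU_def by (auto simp: le_divide_eq)
  define g1 where "g1 = s0*(1-x)+s1*(1-y)+s2*(1-z)"
  define g2 where "g2 = -s0*x-s1*y-s2*z"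
  define g3 where "g3 = s0*(1-x)+s2*(1-z)"
  define g4 where "g4 = -s0*x-s2*z"
  define g5 where "g5 = s1*(1-y)+s2*(1-z)"
  define g6 where "g6 = -s1*y-s2*z"
  have ident: "(a*(x*y))*g1 + (b*((1-x)*(1-y)))*g2 + (b*(x*(1-y)))*g3 + (a*((1-x)*y))*g4
      + (b*((1-x)*y))*g5 + (a*(x*(1-y)))*g6 = s2 * (a*(CL - z*SL) + b*(CU - z*SU))" for a b
    unfolding g1_def g2_def g3_def g4_def g5_def g6_def CL_def SL_def CU_def SU_def
    by (simp add: algebra_simps)
  have sums: "a*(x*y) + b*((1-x)*(1-y)) + b*(x*(1-y)) + a*((1-x)*y) + b*((1-x)*y) + a*(x*(1-y))
      = a*SL + b*SU" for a b
    unfolding SL_def SU_def by (simp add: algebra_simps)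
  have nn: "0 \<le> x*(1-y)" "0 \<le> (1-x)*y" "0 \<le> (1-x)*(1-y)" using x y by simp_all
  show ?thesis
  proof (cases "z * SL = CL")
    case True
    have "g1 \<ge> 0 \<or> g2 \<ge> 0 \<or> g3 \<ge> 0 \<or> g4 \<ge> 0 \<or> g5 \<ge> 0 \<or> g6 \<ge> 0"
      apply (rule key6[of "1*(x*y)" "0*((1-x)*(1-y))" "0*(x*(1-y))" "1*((1-x)*y)" "0*((1-x)*y)" "1*(x*(1-y))"])
      using nn xy0 sums[of 1 0] SL ident[of 1 0] True by simp_all
    then show ?thesis unfolding g1_def g2_def g3_def g4_def g5_def g6_def .
  next
    case False
    define a where "a = CU - z*SU"
    define b where "b = z*SL - CL"
    have a: "a \<ge> 0" and b: "b > 0" using up' lo' False unfolding a_def b_def by auto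
    have "g1 \<ge> 0 \<or> g2 \<ge> 0 \<or> g3 \<ge> 0 \<or> g4 \<ge> 0 \<or> g5 \<ge> 0 \<or> g6 \<ge> 0"
      apply (rule key6[of "a*(x*y)" "b*((1-x)*(1-y))" "b*(x*(1-y))" "a*((1-x)*y)" "b*((1-x)*y)" "a*(x*(1-y))"])
      using nn xy0 a b
      apply (simp_all add: ident sums)
      using SL SU a b apply (smt (verit) mult_nonneg_nonneg mult_pos_pos)
      unfolding a_def b_def by (simp add: algebra_simps)
    then show ?thesis unfolding g1_def g2_def g3_def g4_def g5_def g6_def .
  qed
qed

lemma nec6_lo:
  fixes x y z :: real
  assumes x: "0 \<le> x" "x \<le> 1" and y: "0 \<le> y" "y \<le> 1" and lt: "z < zlow x y"
  shows "\<exists>s0 s1 s2. s0*(1-x)+s1*(1-y)+s2*(1-z) < 0 \<and> -s0*x-s1*y-s2*z < 0 \<and>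
         s0*(1-x)+s2*(1-z) < 0 \<and> -s0*x-s2*z < 0 \<and>
         s1*(1-y)+s2*(1-z) < 0 \<and> -s1*y-s2*z < 0"
proof (cases "z < 0")
  case True
  then show ?thesis by (intro exI[of _ 0] exI[of _ "-1"]) simp
next
  case False
  have nz: "(x,y) \<noteq> (0,0)" using lt False by (auto simp: zlow_def)
  have SL: "x + y - x*y > 0"
  proof -
    have "x > 0 \<or> y > 0" using nz x y by auto
    then show ?thesis using x y
      by (smt (verit) mult_left_le_one_le mult_right_le_one_le mult_nonneg_nonneg)
  qed
  have lt': "z * (x + y - x*y) < x*y"
    using lt nz SL unfolding zlow_def by (auto simp: less_divide_eq)
  have xpos: "x > 0"
  proof (rule ccontr)
    assume "\<not> x > 0" then have "x = 0" using x by simp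
    then have "z*y < 0" using lt' by simp
    moreover have "z*y \<ge> 0" using False y by simp
    ultimately show False by linarith
  qed
  have ypos: "y > 0"
  proof (rule ccontr)
    assume "\<not> y > 0" then have "y = 0" using y by simp
    then have "z*x < 0" using lt' by simp
    moreover have "z*x \<ge> 0" using False x by simp
    ultimately show False by linarith
  qed
  have xy: "x*y > 0" using xpos ypos by simp
  define q where "q = x*y/(x + y - x*y)"
  define t where "t = (z + q) / 2"
  have zq: "z < q" using lt nz unfolding zlow_def q_def by simp
  have tz: "z < t" using zq unfolding t_def by (simp add: field_simps)
  have tq: "t < x*y/(x + y - x*y)" using zq unfolding t_def q_def[symmetric] by (simp add: field_simps)
  have tSL: "t * (x + y - x*y) < x*y" using tq SL by (simp add: less_divide_eq)
  have t0: "t > 0" using tz False by simp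
  have e1: "(t*y)*(1-x)+(t*x)*(1-y)+(-(x*y))*(1-z) < 0"
  proof -
    have "(t*y)*(1-x)+(t*x)*(1-y)+(-(x*y))*(1-z) = t*(x+y-x*y) - x*y + x*y*(z - t)"
      by (simp add: algebra_simps)
    moreover have "x*y*(z-t) < 0" using xy tz by (simp add: mult_pos_neg)
    ultimately show ?thesis using tSL by linarith
  qed
  have e3: "(t*y)*(1-x)+(-(x*y))*(1-z) < 0"
  proof -
    have "(t*x)*(1-y) \<ge> 0" using t0 x y by simp
    then show ?thesis using e1 by linarith
  qed
  have e5: "(t*x)*(1-y)+(-(x*y))*(1-z) < 0"
  proof -
    have "(t*y)*(1-x) \<ge> 0" using t0 x y by simp
    then show ?thesis using e1 by linarith
  qed
  have e4: "-(t*y)*x-(-(x*y))*z < 0"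
  proof -
    have "-(t*y)*x-(-(x*y))*z = x*y*(z-t)" by (simp add: algebra_simps)
    then show ?thesis using xy tz by (simp add: mult_pos_neg)
  qed
  have e6: "-(t*x)*y-(-(x*y))*z < 0"
  proof -
    have "-(t*x)*y-(-(x*y))*z = x*y*(z-t)" by (simp add: algebra_simps)
    then show ?thesis using xy tz by (simp add: mult_pos_neg)
  qed
  have e2: "-(t*y)*x-(t*x)*y-(-(x*y))*z < 0"
  proof -
    have "-(t*y)*x-(t*x)*y-(-(x*y))*z = x*y*(z-t) - t*(x*y)" by (simp add: algebra_simps)
    moreover have "t*(x*y) > 0" using t0 xy by simp
    ultimately show ?thesis using e4 by (simp add: algebra_simps) 
  qed
  show ?thesis
    apply (rule exI[of _ "t*y"], rule exI[of _ "t*x"], rule exI[of _ "-(x*y)"])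
    using e1 e2 e3 e4 e5 e6 by blast
qed

lemma zupp_zlow:
  fixes x y :: real
  assumes x: "0 \<le> x" "x \<le> 1" and y: "0 \<le> y" "y \<le> 1"
  shows "zupp x y = 1 - zlow (1-x) (1-y)"
proof (cases "(x,y) = (1,1)")
  case True then show ?thesis by (simp add: zupp_def zlow_def)
next
  case False
  have d: "1 - x*y = (1-x) + (1-y) - (1-x)*(1-y)" by (simp add: algebra_simps)
  have "1 - x*y \<noteq> 0 \<or> True" by simp
  show ?thesis
  proof (cases "1 - x*y = 0")
    case True
    have "x*y \<le> x" "x*y \<le> y" using x y mult_right_le_one_le[of x y] mult_left_le_one_le[of y x] by simp_all
    then have "x = 1" "y = 1" using True x y by linarith+
    then show ?thesis using False by simp
  next
    case nz: False
    have d': "(1-x) + (1-y) - (1-x)*(1-y) = 1 - x*y" by (simp add: algebra_simps)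
    have zl: "zlow (1-x) (1-y) = (1-x)*(1-y)/(1-x*y)" unfolding zlow_def d' using False by simp
    have "1 - (1-x)*(1-y)/(1-x*y) = ((1-x*y) - (1-x)*(1-y))/(1-x*y)"
      using nz by (simp add: diff_divide_distrib)
    also have "(1-x*y) - (1-x)*(1-y) = x + y - 2*x*y" by (simp add: algebra_simps)
    finally show ?thesis using False zl by (simp add: zupp_def)
  qed
qed

lemma nec6_up:
  fixes x y z :: real
  assumes x: "0 \<le> x" "x \<le> 1" and y: "0 \<le> y" "y \<le> 1" and gt: "zupp x y < z"
  shows "\<exists>s0 s1 s2. s0*(1-x)+s1*(1-y)+s2*(1-z) < 0 \<and> -s0*x-s1*y-s2*z < 0 \<and>
         s0*(1-x)+s2*(1-z) < 0 \<and> -s0*x-s2*z < 0 \<and>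
         s1*(1-y)+s2*(1-z) < 0 \<and> -s1*y-s2*z < 0"
proof -
  have "1 - z < zlow (1-x) (1-y)" using gt zupp_zlow[of x y] x y by simp
  then obtain s0 s1 s2 where h:
    "s0*(1-(1-x))+s1*(1-(1-y))+s2*(1-(1-z)) < 0" "-s0*(1-x)-s1*(1-y)-s2*(1-z) < 0"
    "s0*(1-(1-x))+s2*(1-(1-z)) < 0" "-s0*(1-x)-s2*(1-z) < 0"
    "s1*(1-(1-y))+s2*(1-(1-z)) < 0" "-s1*(1-y)-s2*(1-z) < 0"
    using nec6_lo[of "1-x" "1-y" "1-z"] x y by auto
  show ?thesis
    apply (rule exI[of _ "-s0"], rule exI[of _ "-s1"], rule exI[of _ "-s2"])
    using h by (simp add: algebra_simps)
qed


definition gain3 :: "'w set \<Rightarrow> 'w set \<Rightarrow> 'w set \<Rightarrow> real \<Rightarrow> real \<Rightarrow> real \<Rightarrow> real \<Rightarrow> real \<Rightarrow> real \<Rightarrow> 'w \<Rightarrow> real" where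
  "gain3 A B C x y z s0 s1 s2 w = s0 * indicator A w * (indicator C w - x)
     + s1 * indicator B w * (indicator C w - y) + s2 * indicator (A \<union> B) w * (indicator C w - z)"

lemma gain_expand:
  assumes "J \<subseteq> {..<3}"
  shows "(\<Sum>j\<in>J. s j * indicator (fst (snd ([(C,A,x),(C,B,y),(C,A\<union>B,z)] ! j))) w *
           (indicator (fst ([(C,A,x),(C,B,y),(C,A\<union>B,z)] ! j)) w - snd (snd ([(C,A,x),(C,B,y),(C,A\<union>B,z)] ! j))))
       = gain3 A B C x y z (if 0\<in>J then s 0 else 0) (if 1\<in>J then s 1 else 0) (if 2\<in>J then s 2 else 0) w"
proof -
  let ?f = "\<lambda>j. s j * indicator (fst (snd ([(C,A,x),(C,B,y),(C,A\<union>B,z)] ! j))) w *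
           (indicator (fst ([(C,A,x),(C,B,y),(C,A\<union>B,z)] ! j)) w - snd (snd ([(C,A,x),(C,B,y),(C,A\<union>B,z)] ! j)))"
  have "sum ?f J = sum ?f ({..<3} \<inter> J)" using assms by (simp add: Int_absorb1)
  also have "\<dots> = (\<Sum>j\<in>{..<3}. if j \<in> J then ?f j else 0)" by (rule sum.inter_restrict) simp
  also have "\<dots> = gain3 A B C x y z (if 0\<in>J then s 0 else 0) (if 1\<in>J then s 1 else 0) (if 2\<in>J then s 2 else 0) w"
  proof -
    have l: "{..<3::nat} = {0,1,2}" by auto
    have n: "[(C,A,x),(C,B,y),(C,A\<union>B,z)] ! 0 = (C,A,x)" "[(C,A,x),(C,B,y),(C,A\<union>B,z)] ! 1 = (C,B,y)"
       "[(C,A,x),(C,B,y),(C,A\<union>B,z)] ! 2 = (C,A\<union>B,z)" by (simp_all add: numeral_2_eq_2)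
    show ?thesis unfolding l by (simp add: n gain3_def)
  qed
  finally show ?thesis .
qed

lemma union_expand:
  assumes "J \<subseteq> {..<3}" "J \<noteq> {}" "J \<noteq> {0}" "J \<noteq> {1}"
  shows "(\<Union>j\<in>J. fst (snd ([(C,A,x),(C,B,y),(C,A\<union>B,z)] ! j))) = A \<union> B"
proof -
  have "J \<in> Pow {0,1,2}" using assms(1) by auto
  then have "J \<in> {{2},{0,1},{0,2},{1,2},{0,1,2}}" using assms(2-4) by (simp add: Pow_insert) blast
  moreover have "[(C,A,x),(C,B,y),(C,A\<union>B,z)] ! 2 = (C,A\<union>B,z)" by (simp add: numeral_2_eq_2)
  ultimately show ?thesis by (elim insertE emptyE) auto
qed

lemma indep_atoms:
  assumes "logically_independent3 A B C"
  shows "A\<inter>B\<inter>C \<noteq> {}" "A\<inter>B\<inter>-C \<noteq> {}" "A\<inter>-B\<inter>C \<noteq> {}" "A\<inter>-B\<inter>-C \<noteq> {}"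
        "-A\<inter>B\<inter>C \<noteq> {}" "-A\<inter>B\<inter>-C \<noteq> {}"
  using assms unfolding logically_independent3_def by simp_all

lemma gain_cases:
  assumes "w \<in> A \<union> B"
  shows "gain3 A B C x y z s0 s1 s2 w = s0*(1-x)+s1*(1-y)+s2*(1-z) \<or>
         gain3 A B C x y z s0 s1 s2 w = -s0*x-s1*y-s2*z \<or>
         gain3 A B C x y z s0 s1 s2 w = s0*(1-x)+s2*(1-z) \<or>
         gain3 A B C x y z s0 s1 s2 w = -s0*x-s2*z \<or>
         gain3 A B C x y z s0 s1 s2 w = s1*(1-y)+s2*(1-z) \<or>
         gain3 A B C x y z s0 s1 s2 w = -s1*y-s2*z"
  using assms by (cases "w \<in> A"; cases "w \<in> B"; cases "w \<in> C") (simp_all add: gain3_def)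

lemma suff_set:
  assumes indep: "logically_independent3 A B C"
    and x: "0 \<le> x" "x \<le> 1" and y: "0 \<le> y" "y \<le> 1"
    and lo: "zlow x y \<le> z" and up: "z \<le> zupp x y"
  shows "\<exists>w\<in>A \<union> B. 0 \<le> gain3 A B C x y z s0 s1 s2 w"
proof -
  note at = indep_atoms[OF indep]
  obtain w1 where w1: "w1 \<in> A\<inter>B\<inter>C" using at(1) by blast
  obtain w2 where w2: "w2 \<in> A\<inter>B\<inter>-C" using at(2) by blast
  obtain w3 where w3: "w3 \<in> A\<inter>-B\<inter>C" using at(3) by blast
  obtain w4 where w4: "w4 \<in> A\<inter>-B\<inter>-C" using at(4) by blast
  obtain w5 where w5: "w5 \<in> -A\<inter>B\<inter>C" using at(5) by blast
  obtain w6 where w6: "w6 \<in> -A\<inter>B\<inter>-C" using at(6) by blast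
  have g1: "gain3 A B C x y z s0 s1 s2 w1 = s0*(1-x)+s1*(1-y)+s2*(1-z)" using w1 by (simp add: gain3_def)
  have g2: "gain3 A B C x y z s0 s1 s2 w2 = -s0*x-s1*y-s2*z" using w2 by (simp add: gain3_def)
  have g3: "gain3 A B C x y z s0 s1 s2 w3 = s0*(1-x)+s2*(1-z)" using w3 by (simp add: gain3_def)
  have g4: "gain3 A B C x y z s0 s1 s2 w4 = -s0*x-s2*z" using w4 by (simp add: gain3_def)
  have g5: "gain3 A B C x y z s0 s1 s2 w5 = s1*(1-y)+s2*(1-z)" using w5 by (simp add: gain3_def)
  have g6: "gain3 A B C x y z s0 s1 s2 w6 = -s1*y-s2*z" using w6 by (simp add: gain3_def)
  have u: "w1 \<in> A \<union> B" "w2 \<in> A \<union> B" "w3 \<in> A \<union> B" "w4 \<in> A \<union> B" "w5 \<in> A \<union> B" "w6 \<in> A \<union> B"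
    using w1 w2 w3 w4 w5 w6 by auto
  from suff6[OF x y lo up, of s0 s1 s2] show ?thesis
    using g1 g2 g3 g4 g5 g6 u by metis
qed

lemma single_A:
  assumes indep: "logically_independent3 A B C" and x: "0 \<le> x" "x \<le> 1"
  shows "\<exists>w\<in>A. 0 \<le> gain3 A B C x y z s0 0 0 w"
proof -
  note at = indep_atoms[OF indep]
  obtain w1 where w1: "w1 \<in> A\<inter>B\<inter>C" using at(1) by blast
  obtain w2 where w2: "w2 \<in> A\<inter>B\<inter>-C" using at(2) by blast
  have g1: "gain3 A B C x y z s0 0 0 w1 = s0*(1-x)" using w1 by (simp add: gain3_def)
  have g2: "gain3 A B C x y z s0 0 0 w2 = -s0*x" using w2 by (simp add: gain3_def)
  show ?thesis
  proof (cases "s0 \<ge> 0")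
    case True then show ?thesis using g1 w1 x by (intro bexI[of _ w1]) auto
  next
    case False then show ?thesis using g2 w2 x mult_nonpos_nonneg[of s0 x] by (intro bexI[of _ w2]) auto
  qed
qed

lemma single_B:
  assumes indep: "logically_independent3 A B C" and y: "0 \<le> y" "y \<le> 1"
  shows "\<exists>w\<in>B. 0 \<le> gain3 A B C x y z 0 s1 0 w"
proof -
  note at = indep_atoms[OF indep]
  obtain w1 where w1: "w1 \<in> A\<inter>B\<inter>C" using at(1) by blast
  obtain w2 where w2: "w2 \<in> A\<inter>B\<inter>-C" using at(2) by blast
  have g1: "gain3 A B C x y z 0 s1 0 w1 = s1*(1-y)" using w1 by (simp add: gain3_def)
  have g2: "gain3 A B C x y z 0 s1 0 w2 = -s1*y" using w2 by (simp add: gain3_def)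
  show ?thesis
  proof (cases "s1 \<ge> 0")
    case True then show ?thesis using g1 w1 y by (intro bexI[of _ w1]) auto
  next
    case False then show ?thesis using g2 w2 y mult_nonpos_nonneg[of s1 y] by (intro bexI[of _ w2]) auto
  qed
qed

lemma part1:
  fixes A B C :: "'w set" and x y z :: real
  assumes indep: "logically_independent3 A B C"
    and x: "0 \<le> x" "x \<le> 1" and y: "0 \<le> y" "y \<le> 1"
  shows "coherent [(C, A, x), (C, B, y), (C, A \<union> B, z)] \<longleftrightarrow> zlow x y \<le> z \<and> z \<le> zupp x y"
proof
  assume coh: "coherent [(C, A, x), (C, B, y), (C, A \<union> B, z)]"
  have main: "\<exists>w\<in>A\<union>B. 0 \<le> gain3 A B C x y z s0 s1 s2 w" for s0 s1 s2
  proof -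
    let ?s = "\<lambda>j::nat. if j = 0 then s0 else if j = 1 then s1 else s2"
    have J: "{..<3::nat} \<subseteq> {..<length [(C, A, x), (C, B, y), (C, A \<union> B, z)]}" "{..<3::nat} \<noteq> {}" by (auto simp: lessThan_empty_iff)
    note c2 = conjunct2[OF coh[unfolded coherent_def]]
    have "\<exists>w \<in> (\<Union>j\<in>{..<3}. fst (snd ([(C, A, x), (C, B, y), (C, A \<union> B, z)] ! j))).
       (\<Sum>j\<in>{..<3}. ?s j * indicator (fst (snd ([(C,A,x),(C,B,y),(C,A\<union>B,z)] ! j))) w *
           (indicator (fst ([(C,A,x),(C,B,y),(C,A\<union>B,z)] ! j)) w - snd (snd ([(C,A,x),(C,B,y),(C,A\<union>B,z)] ! j)))) \<ge> 0"
      by (rule c2[rule_format, OF J(1) J(2)])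
    then obtain w where
      w: "w \<in> (\<Union>j\<in>{..<3}. fst (snd ([(C, A, x), (C, B, y), (C, A \<union> B, z)] ! j)))"
      and g: "(\<Sum>j\<in>{..<3}. ?s j * indicator (fst (snd ([(C,A,x),(C,B,y),(C,A\<union>B,z)] ! j))) w *
           (indicator (fst ([(C,A,x),(C,B,y),(C,A\<union>B,z)] ! j)) w - snd (snd ([(C,A,x),(C,B,y),(C,A\<union>B,z)] ! j)))) \<ge> 0"
      by (rule bexE)
    have l3: "{..<3::nat} = {0,1,2}" by auto
    have U: "(\<Union>j\<in>{..<3}. fst (snd ([(C, A, x), (C, B, y), (C, A \<union> B, z)] ! j))) = A \<union> B"
      by (rule union_expand) (simp_all only: l3, auto)
    have "0 \<le> gain3 A B C x y z (if 0\<in>{..<3::nat} then ?s 0 else 0) (if 1\<in>{..<3::nat} then ?s 1 else 0) (if 2\<in>{..<3::nat} then ?s 2 else 0) w"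
      using g unfolding gain_expand[OF order_refl] .
    moreover have "(if 0\<in>{..<3::nat} then ?s 0 else 0) = s0" "(if 1\<in>{..<3::nat} then ?s 1 else 0) = s1"
      "(if 2\<in>{..<3::nat} then ?s 2 else 0) = s2" by simp_all
    ultimately have "0 \<le> gain3 A B C x y z s0 s1 s2 w" by simp
    moreover have "w \<in> A \<union> B" using w U by simp
    ultimately show ?thesis by blast
  qed
  show "zlow x y \<le> z \<and> z \<le> zupp x y"
  proof (rule ccontr)
    assume "\<not> (zlow x y \<le> z \<and> z \<le> zupp x y)"
    then have "z < zlow x y \<or> zupp x y < z" by auto
    then obtain s0 s1 s2 where h: "s0*(1-x)+s1*(1-y)+s2*(1-z) < 0 \<and> -s0*x-s1*y-s2*z < 0 \<and>
         s0*(1-x)+s2*(1-z) < 0 \<and> -s0*x-s2*z < 0 \<and>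
         s1*(1-y)+s2*(1-z) < 0 \<and> -s1*y-s2*z < 0"
      using nec6_lo[OF x y] nec6_up[OF x y] by blast
    obtain w where w: "w \<in> A \<union> B" "0 \<le> gain3 A B C x y z s0 s1 s2 w" using main by blast
    from gain_cases[OF w(1), of C x y z s0 s1 s2] w(2) h show False by linarith
  qed
next
  assume b: "zlow x y \<le> z \<and> z \<le> zupp x y"
  note at = indep_atoms[OF indep]
  have ne: "\<forall>j < length [(C, A, x), (C, B, y), (C, A \<union> B, z)].
      fst (snd ([(C, A, x), (C, B, y), (C, A \<union> B, z)] ! j)) \<noteq> {}"
  proof (intro allI impI)
    fix j assume "j < length [(C, A, x), (C, B, y), (C, A \<union> B, z)]"
    then have "j = 0 \<or> j = 1 \<or> j = 2" by auto
    then show "fst (snd ([(C, A, x), (C, B, y), (C, A \<union> B, z)] ! j)) \<noteq> {}"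
      using at(1) by (auto simp: numeral_2_eq_2)
  qed
  show "coherent [(C, A, x), (C, B, y), (C, A \<union> B, z)]"
    unfolding coherent_def
  proof (intro conjI ne allI impI)
    fix J :: "nat set" and s :: "nat \<Rightarrow> real"
    assume J: "J \<subseteq> {..<length [(C, A, x), (C, B, y), (C, A \<union> B, z)]}" "J \<noteq> {}"
    then have J3: "J \<subseteq> {..<3}" by (simp add: numeral_3_eq_3)
    note ge = gain_expand[OF J3, of s C A x B y z]
    show "\<exists>w\<in>\<Union>j\<in>J. fst (snd ([(C, A, x), (C, B, y), (C, A \<union> B, z)] ! j)).
            0 \<le> (\<Sum>j\<in>J. s j * indicator (fst (snd ([(C, A, x), (C, B, y), (C, A \<union> B, z)] ! j))) w *
                  (indicator (fst ([(C, A, x), (C, B, y), (C, A \<union> B, z)] ! j)) w -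
                   snd (snd ([(C, A, x), (C, B, y), (C, A \<union> B, z)] ! j))))"
    proof -
      let ?U = "\<Union>j\<in>J. fst (snd ([(C, A, x), (C, B, y), (C, A \<union> B, z)] ! j))"
      have "\<exists>w\<in>?U. 0 \<le> gain3 A B C x y z (if 0\<in>J then s 0 else 0) (if 1\<in>J then s 1 else 0) (if 2\<in>J then s 2 else 0) w"
      proof (cases "J = {0}")
        case True
        then show ?thesis using single_A[OF indep x, of y z "s 0"] by simp
      next
        case F0: False
        show ?thesis
        proof (cases "J = {1}")
          case True
          then show ?thesis using single_B[OF indep y, of x z "s 1"] by simp
        next
          case False
          then show ?thesis unfolding union_expand[OF J3 J(2) F0 False]
            using suff_set[OF indep x y, of z] b by blast
        qed
      qed
      then show ?thesis by (simp only: ge)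
    qed
  qed
qed

lemma zlow_nonneg:
  fixes x y :: real
  assumes "0 \<le> x" "x \<le> 1" "0 \<le> y" "y \<le> 1"
  shows "0 \<le> zlow x y"
proof (cases "(x,y) = (0,0)")
  case True then show ?thesis by (simp add: zlow_def)
next
  case False
  have "x*y \<le> y" using assms mult_left_le_one_le[of y x] by simp
  then have "x + y - x*y \<ge> 0" using assms by linarith
  then show ?thesis using False assms by (simp add: zlow_def)
qed

lemma SL_pos:
  fixes x y :: real
  assumes "0 \<le> x" "x \<le> 1" "0 \<le> y" "y \<le> 1" "(x,y) \<noteq> (0,0)"
  shows "x + y - x*y > 0"
proof -
  have "x > 0 \<or> y > 0" using assms by auto
  then show ?thesis using assms
    by (smt (verit) mult_left_le_one_le mult_right_le_one_le mult_nonneg_nonneg)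
qed

lemma zlow_le_x:
  fixes x y :: real
  assumes "0 \<le> x" "x \<le> 1" "0 \<le> y" "y \<le> 1"
  shows "zlow x y \<le> x"
proof (cases "(x,y) = (0,0)")
  case True then show ?thesis by (simp add: zlow_def)
next
  case False
  have S: "x + y - x*y > 0" using SL_pos[OF assms False] .
  have "x*y \<le> x * (x + y - x*y)"
  proof -
    have "x * (x + y - x*y) - x*y = x*x*(1-y)" by (simp add: algebra_simps)
    moreover have "x*x*(1-y) \<ge> 0" using assms by simp
    ultimately show ?thesis by linarith
  qed
  then show ?thesis using False S by (simp add: zlow_def divide_le_eq)
qed

lemma zlow_sym: "zlow x y = zlow y x"
  by (simp add: zlow_def algebra_simps)

lemma zlow_mono1:
  fixes x x' y :: real
  assumes "0 \<le> x" "x \<le> x'" "x' \<le> 1" "0 \<le> y" "y \<le> 1"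
  shows "zlow x y \<le> zlow x' y"
proof (cases "(x,y) = (0,0)")
  case True then show ?thesis using zlow_nonneg[of x' y] assms by (simp add: zlow_def)
next
  case False
  have F': "(x',y) \<noteq> (0,0)" using False assms by auto
  have S: "x + y - x*y > 0" using SL_pos[OF _ _ _ _ False] assms by simp
  have S': "x' + y - x'*y > 0" using SL_pos[OF _ _ _ _ F'] assms by simp
  have "x*y * (x' + y - x'*y) \<le> x'*y * (x + y - x*y)"
  proof -
    have "x'*y * (x + y - x*y) - x*y * (x' + y - x'*y) = y*y*(x'-x)" by (simp add: algebra_simps)
    moreover have "y*y*(x'-x) \<ge> 0" using assms by simp
    ultimately show ?thesis by linarith
  qed
  then have "x*y / (x + y - x*y) \<le> x'*y / (x' + y - x'*y)"
    using S S' by (simp add: divide_le_eq le_divide_eq mult.commute mult.left_commute)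
  then show ?thesis using False F' by (simp add: zlow_def)
qed

lemma zlow_mono:
  fixes x x' y y' :: real
  assumes "0 \<le> x" "x \<le> x'" "x' \<le> 1" "0 \<le> y" "y \<le> y'" "y' \<le> 1"
  shows "zlow x y \<le> zlow x' y'"
proof -
  have "zlow x y \<le> zlow x' y" using zlow_mono1[of x x' y] assms by simp
  also have "\<dots> = zlow y x'" by (rule zlow_sym)
  also have "\<dots> \<le> zlow y' x'" using zlow_mono1[of y y' x'] assms by simp
  also have "\<dots> = zlow x' y'" by (rule zlow_sym)
  finally show ?thesis .
qed

lemma box_coherent:
  fixes x y z :: real
  assumes "0 \<le> x" "x \<le> 1" "0 \<le> y" "y \<le> 1" "min x y \<le> z" "z \<le> max x y"
  shows "zlow x y \<le> z \<and> z \<le> zupp x y"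
proof -
  have "zlow x y \<le> x" "zlow x y \<le> y" using zlow_le_x[of x y] zlow_le_x[of y x] zlow_sym[of x y] assms by simp_all
  moreover have "x \<le> zupp x y" "y \<le> zupp x y"
    using zlow_le_x[of "1-x" "1-y"] zlow_le_x[of "1-y" "1-x"] zlow_sym[of "1-x" "1-y"] zupp_zlow[of x y] assms by simp_all
  ultimately show ?thesis using assms by linarith
qed

theorem mainTheorem2:
  fixes A B C :: "'w set"
  assumes indep: "logically_independent3 A B C"
  shows "(\<forall>x y z :: real. x \<in> {0..1} \<longrightarrow> y \<in> {0..1} \<longrightarrow>
            (coherent [(C, A, x), (C, B, y), (C, A \<union> B, z)] \<longleftrightarrow>
               zlow x y \<le> z \<and> z \<le> zupp x y))
       \<and> (\<forall>\<alpha>1 \<beta>1 \<alpha>2 \<beta>2 :: real.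
            0 \<le> \<alpha>1 \<longrightarrow> \<alpha>1 \<le> \<beta>1 \<longrightarrow> \<beta>1 \<le> 1 \<longrightarrow>
            0 \<le> \<alpha>2 \<longrightarrow> \<alpha>2 \<le> \<beta>2 \<longrightarrow> \<beta>2 \<le> 1 \<longrightarrow>
            (\<alpha>1, \<alpha>2) \<noteq> (0, 0) \<longrightarrow> (\<beta>1, \<beta>2) \<noteq> (1, 1) \<longrightarrow>
            {z. \<exists>x \<in> {\<alpha>1..\<beta>1}. \<exists>y \<in> {\<alpha>2..\<beta>2}.
                   coherent [(C, A, x), (C, B, y), (C, A \<union> B, z)]}
            = {\<alpha>1 * \<alpha>2 / (\<alpha>1 + \<alpha>2 - \<alpha>1 * \<alpha>2) ..
               (\<beta>1 + \<beta>2 - 2 * \<beta>1 * \<beta>2) / (1 - \<beta>1 * \<beta>2)})"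
proof (intro conjI allI impI)
  fix x y z :: real
  assume "x \<in> {0..1}" "y \<in> {0..1}"
  then show "coherent [(C, A, x), (C, B, y), (C, A \<union> B, z)] \<longleftrightarrow> zlow x y \<le> z \<and> z \<le> zupp x y"
    using part1[OF indep] by simp
next
  fix a1 b1 a2 b2 :: real
  assume h: "0 \<le> a1" "a1 \<le> b1" "b1 \<le> 1" "0 \<le> a2" "a2 \<le> b2" "b2 \<le> 1"
    "(a1, a2) \<noteq> (0, 0)" "(b1, b2) \<noteq> (1, 1)"
  have La: "a1 * a2 / (a1 + a2 - a1 * a2) = zlow a1 a2" using h(7) by (simp add: zlow_def)
  have Ub: "(b1 + b2 - 2 * b1 * b2) / (1 - b1 * b2) = zupp b1 b2" using h(8) by (simp add: zupp_def)
  have P1: "coherent [(C, A, x), (C, B, y), (C, A \<union> B, z)] \<longleftrightarrow> zlow x y \<le> z \<and> z \<le> zupp x y"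
    if "x \<in> {a1..b1}" "y \<in> {a2..b2}" for x y z
    using part1[OF indep, of x y z] that h by simp
  show "{z. \<exists>x \<in> {a1..b1}. \<exists>y \<in> {a2..b2}. coherent [(C, A, x), (C, B, y), (C, A \<union> B, z)]}
        = {a1 * a2 / (a1 + a2 - a1 * a2) .. (b1 + b2 - 2 * b1 * b2) / (1 - b1 * b2)}"
    unfolding La Ub
  proof (intro set_eqI iffI)
    fix z assume "z \<in> {z. \<exists>x \<in> {a1..b1}. \<exists>y \<in> {a2..b2}. coherent [(C, A, x), (C, B, y), (C, A \<union> B, z)]}"
    then obtain x y where xy: "x \<in> {a1..b1}" "y \<in> {a2..b2}" and c: "coherent [(C, A, x), (C, B, y), (C, A \<union> B, z)]"
      by blast
    have zz: "zlow x y \<le> z" "z \<le> zupp x y" using P1[OF xy] c by auto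
    have "zlow a1 a2 \<le> zlow x y" using zlow_mono[of a1 x a2 y] xy h by simp
    moreover have "zupp x y \<le> zupp b1 b2"
    proof -
      have "zlow (1-b1) (1-b2) \<le> zlow (1-x) (1-y)" using zlow_mono[of "1-b1" "1-x" "1-b2" "1-y"] xy h by simp
      then show ?thesis using zupp_zlow[of x y] zupp_zlow[of b1 b2] xy h by simp
    qed
    ultimately show "z \<in> {zlow a1 a2 .. zupp b1 b2}" using zz by simp
  next
    fix z assume z: "z \<in> {zlow a1 a2 .. zupp b1 b2}"
    define x where "x = max a1 (min z b1)"
    define y where "y = max a2 (min z b2)"
    have xy: "x \<in> {a1..b1}" "y \<in> {a2..b2}" unfolding x_def y_def using h by auto
    have "zlow x y \<le> z \<and> z \<le> zupp x y"
    proof (cases "(a1 \<le> z \<and> z \<le> b1) \<or> (a2 \<le> z \<and> z \<le> b2)")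
      case True
      then have "x = z \<or> y = z" unfolding x_def y_def by auto
      then have "min x y \<le> z" "z \<le> max x y" by auto
      then show ?thesis using box_coherent[of x y z] xy h by simp
    next
      case False
      then consider "z < a1" "z < a2" | "z > b1" "z > b2" | "z < a1" "z > b2" | "z > b1" "z < a2"
        by linarith
      then show ?thesis
      proof cases
        case 1
        then have "x = a1" "y = a2" unfolding x_def y_def using h by auto
        then show ?thesis using box_coherent[of x y x] box_coherent[of x y y] 1 z h by auto
      next
        case 2
        then have "x = b1" "y = b2" unfolding x_def y_def using h by auto
        then show ?thesis using box_coherent[of x y x] box_coherent[of x y y] 2 z h by auto
      next
        case 3
        then have "x = a1" "y = b2" unfolding x_def y_def using h by auto
        then show ?thesis using box_coherent[of x y z] 3 h by auto
      next
        case 4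
        then have "x = b1" "y = a2" unfolding x_def y_def using h by auto
        then show ?thesis using box_coherent[of x y z] 4 h by auto
      qed
    qed
    then show "z \<in> {z. \<exists>x \<in> {a1..b1}. \<exists>y \<in> {a2..b2}. coherent [(C, A, x), (C, B, y), (C, A \<union> B, z)]}"
      using P1[OF xy] xy by blast
  qed
qed

end
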